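(* Let $Z_1,\dots,Z_n$ be i.i.d. real random variables with probability density function $f_Z$ such that $f_Z(0)=0$ and, for some $\delta>0$, $f_Z$ is continuously differentiable on $[0,\delta]$. Let $\sigma^2:\mathbb{R}\to[0,\infty)$ be bounded and right-continuous at $z=0$. Let $K:\mathbb{R}\to[0,\infty)$ be bounded and supported on $[-C_K,C_K]$ for some $C_K>0$, with $\int K(z)1\{z\ge0\}dz=\int K(z)1\{z<0\}dz=1$ and with the matrices $\int K(z)1\{z\ge0\}r_1(z)r_1(z)'dz$ and $\int K(z)1\{z<0\}r_1(z)r_1(z)'dz$ nonsingular, where $r_1(z)=(1,z)'$. For $h>0$ define $$\Gamma_+(h)=\frac{1}{nh}\sum_{i=1}^n1\{Z_i\ge0\}K(Z_i/h)r_1(Z_i/h)r_1(Z_i/h)',\qquad \Psi_+(h)=\frac{1}{nh^2}\sum_{i=1}^n1\{Z_i\ge0\}K(Z_i/h)^2r_1(Z_i/h)r_1(Z_i/h)'\sigma^2(Z_i).$$ If $n\to\infty$, $h\to0$ and $nh^2\to\infty$, then $$h^{-1}\Gamma_+(h)=C_{\Gamma,+}+o_p(1)\quad\text{and}\quad\Psi_+(h)=C_{\Psi,+}+o_p(1),$$ where $C_{\Gamma,+}=f_Z'(0)\int_0^\infty zK(z)r_1(z)r_1(z)'dz$ and $C_{\Psi,+}=f_Z'(0)\sigma^2(0)\int_0^\infty zK(z)^2r_1(z)r_1(z)'dz$.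
   Context: $f_Z'(0)$ denotes the (right) derivative of $f_Z$ at $0$. In the paper's application $Z_i$ is a signed distance running variable and $\sigma^2(z)=\mathrm{Var}(Y_i\mid Z_i=z)$. *)

theory Defs
  imports "HOL-Probability.Probability"
begin

definition r1 :: "real \<Rightarrow> real^2" where
  "r1 z = vector [1, z]"

definition outer :: "real^2 \<Rightarrow> real^2 \<Rightarrow> real^2^2" where
  "outer u v = (\<chi> i j. u $ i * v $ j)"

definition Gamma_plus ::
  "(nat \<Rightarrow> 'w \<Rightarrow> real) \<Rightarrow> (real \<Rightarrow> real) \<Rightarrow> nat \<Rightarrow> real \<Rightarrow> 'w \<Rightarrow> real^2^2" where
  "Gamma_plus Z K n h w = (1 / (real n * h)) *\<^sub>R (\<Sum>i<n. (indicator {0..} (Z i w) * K (Z i w / h)) *\<^sub>R outer (r1 (Z i w / h)) (r1 (Z i w / h)))"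

definition Psi_plus ::
  "(nat \<Rightarrow> 'w \<Rightarrow> real) \<Rightarrow> (real \<Rightarrow> real) \<Rightarrow> (real \<Rightarrow> real) \<Rightarrow> nat \<Rightarrow> real \<Rightarrow> 'w \<Rightarrow> real^2^2" where
  "Psi_plus Z K s2 n h w = (1 / (real n * h^2)) *\<^sub>R (\<Sum>i<n. (indicator {0..} (Z i w) * (K (Z i w / h))^2 * s2 (Z i w)) *\<^sub>R outer (r1 (Z i w / h)) (r1 (Z i w / h)))"

(* X_n = c + o_p(1): convergence in probability to a constant *)
definition conv_in_prob :: "'w measure \<Rightarrow> (nat \<Rightarrow> 'w \<Rightarrow> 'b::real_normed_vector) \<Rightarrow> 'b \<Rightarrow> bool" where
  "conv_in_prob M X c \<longleftrightarrow> (\<forall>e>0. (\<lambda>n. measure M {w \<in> space M. norm (X n w - c) > e}) \<longlonglongrightarrow> 0)"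

end

theory Submission
  imports Defs
begin


lemma bound_int:
  fixes F :: "real \<Rightarrow> real"
  assumes Fm: "F \<in> borel_measurable borel"
    and Fb: "\<And>u. \<bar>F u\<bar> \<le> c * indicator {0..CK} u" and CK: "CK \<ge> 0"
  shows "integrable lborel F" "\<bar>integral\<^sup>L lborel F\<bar> \<le> c * CK"
proof -
  have ii: "integrable lborel (\<lambda>u. c * indicator {0..CK} u :: real)"
    using CK by (intro integrable_mult_right integrable_real_indicator) auto
  show iF: "integrable lborel F"
    using Fm order_trans[OF Fb abs_ge_self] by (intro Bochner_Integration.integrable_bound[OF ii]) auto
  have "norm (integral\<^sup>L lborel F) \<le> (\<integral>u. c * indicator {0..CK} u \<partial>lborel)"
    by (rule Bochner_Integration.integral_norm_bound_integral[OF iF ii]) (use Fb in auto)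
  also have "\<dots> = c * CK" using CK by simp
  finally show "\<bar>integral\<^sup>L lborel F\<bar> \<le> c * CK" by simp
qed

definition gg :: "(real \<Rightarrow> real) \<Rightarrow> (real \<Rightarrow> real) \<Rightarrow> real \<Rightarrow> real \<Rightarrow> real" where
  "gg \<phi> \<tau> h z = indicator {0..} z * \<phi> (z / h) * \<tau> z / h\<^sup>2"

lemma gg_meas[measurable]:
  assumes "\<phi> \<in> borel_measurable borel" "\<tau> \<in> borel_measurable borel"
  shows "gg \<phi> \<tau> h \<in> borel_measurable borel"
  unfolding gg_def using assms by measurable

lemma gg_change:
  fixes f :: "real \<Rightarrow> real"
  assumes h: "h > 0"
  shows "(\<integral>z. f z * gg \<phi> \<tau> h z \<partial>lborel)
     = (\<integral>u. indicator {0..} u * \<phi> u * (f (h * u) * \<tau> (h * u) / h) \<partial>lborel)"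
proof -
  have "(\<integral>z. f z * gg \<phi> \<tau> h z \<partial>lborel) = \<bar>h\<bar> *\<^sub>R (\<integral>u. f (0 + h * u) * gg \<phi> \<tau> h (0 + h * u) \<partial>lborel)"
    using h by (intro lborel_integral_real_affine) auto
  also have "\<dots> = (\<integral>u. h * (f (0 + h * u) * gg \<phi> \<tau> h (0 + h * u)) \<partial>lborel)"
    using h by simp
  also have "\<dots> = (\<integral>u. indicator {0..} u * \<phi> u * (f (h * u) * \<tau> (h * u) / h) \<partial>lborel)"
  proof (rule Bochner_Integration.integral_cong[OF refl])
    fix u
    have "indicator {0..} (h * u) = (indicator {0..} u :: real)"
      using h by (simp add: indicator_def zero_le_mult_iff)
    then show "h * (f (0 + h * u) * gg \<phi> \<tau> h (0 + h * u)) = indicator {0..} u * \<phi> u * (f (h * u) * \<tau> (h * u) / h)"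
      using h by (simp add: gg_def power2_eq_square field_simps)
  qed
  finally show ?thesis .
qed

lemma expect_lim:
  fixes f \<phi> \<tau> :: "real \<Rightarrow> real" and h :: "nat \<Rightarrow> real"
  assumes f0: "f 0 = 0"
    and fd: "(f has_real_derivative d) (at 0 within {0..\<delta>})" and \<delta>: "\<delta> > 0"
    and \<phi>m: "\<phi> \<in> borel_measurable borel" and \<phi>B: "\<And>u. \<bar>\<phi> u\<bar> \<le> B"
    and \<phi>S: "\<And>u. u > CK \<Longrightarrow> \<phi> u = 0" and CK: "CK > 0"
    and \<tau>m: "\<tau> \<in> borel_measurable borel" and \<tau>B: "\<And>u. \<bar>\<tau> u\<bar> \<le> T"
    and \<tau>c: "continuous (at 0 within {0..}) \<tau>"
    and hpos: "\<And>n. h n > 0" and hlim: "h \<longlonglongrightarrow> 0"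
    and fm: "f \<in> borel_measurable borel"
  shows "(\<lambda>n. \<integral>z. f z * gg \<phi> \<tau> (h n) z \<partial>lborel)
           \<longlonglongrightarrow> d * \<tau> 0 * (\<integral>u. indicator {0..} u * (u * \<phi> u) \<partial>lborel)"
proof -
  have B0: "B \<ge> 0" using \<phi>B[of 0] by simp
  have T0: "T \<ge> 0" using \<tau>B[of 0] by simp
  define S where "S u = indicator {0..} u * (u * \<phi> u)" for u
  have Sm: "S \<in> borel_measurable borel" unfolding S_def using \<phi>m by measurable
  have Sb: "\<bar>S u\<bar> \<le> (B * CK) * indicator {0..CK} u" for u
  proof (cases "0 \<le> u \<and> u \<le> CK")
    case True
    then have "\<bar>S u\<bar> = u * \<bar>\<phi> u\<bar>" by (simp add: S_def abs_mult)
    also have "\<dots> \<le> CK * B" using True \<phi>B[of u] B0 by (intro mult_mono) auto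
    finally show ?thesis using True by (simp add: mult.commute)
  next
    case False
    then show ?thesis using \<phi>S[of u] by (auto simp: S_def)
  qed
  have Si: "integrable lborel S" using bound_int(1)[OF Sm Sb] CK by simp
  define F where "F n u = indicator {0..} u * \<phi> u * (f (h n * u) * \<tau> (h n * u) / h n)" for n u
  have Fm: "F n \<in> borel_measurable borel" for n unfolding F_def using \<phi>m \<tau>m fm by measurable
  have eqF: "(\<integral>z. f z * gg \<phi> \<tau> (h n) z \<partial>lborel) = integral\<^sup>L lborel (F n)" for n
    unfolding F_def by (rule gg_change[OF hpos])
  define L where "L = d * \<tau> 0 * integral\<^sup>L lborel S"
  show ?thesis
    unfolding eqF S_def[symmetric] L_def[symmetric]
  proof (rule tendstoI)
    fix e :: real assume e: "e > 0"
    define C where "C = B * CK * CK * (T + \<bar>d\<bar>) + 1"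
    have C: "C > 0" unfolding C_def using B0 T0 CK by (intro add_nonneg_pos mult_nonneg_nonneg) auto
    define \<epsilon> where "\<epsilon> = e / (2 * C)"
    have \<epsilon>: "\<epsilon> > 0" unfolding \<epsilon>_def using e C by simp
    have "((\<lambda>y. (f y - f 0) / (y - 0)) \<longlongrightarrow> d) (at 0 within {0..\<delta>})"
      using fd by (simp add: has_field_derivative_iff)
    then have "\<forall>\<^sub>F y in at 0 within {0..\<delta>}. dist (f y / y) d < \<epsilon>"
      using \<epsilon> f0 by (auto dest: tendstoD)
    then obtain \<eta>1 where \<eta>1: "\<eta>1 > 0" and H1: "\<And>y. y \<in> {0..\<delta>} \<Longrightarrow> y \<noteq> 0 \<Longrightarrow> dist y 0 < \<eta>1 \<Longrightarrow> dist (f y / y) d < \<epsilon>"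
      unfolding eventually_at by auto
    have "(\<tau> \<longlongrightarrow> \<tau> 0) (at 0 within {0..})" using \<tau>c by (simp add: continuous_within)
    then have "\<forall>\<^sub>F y in at 0 within {0..}. dist (\<tau> y) (\<tau> 0) < \<epsilon>"
      using \<epsilon> by (auto dest: tendstoD)
    then obtain \<eta>2 where \<eta>2: "\<eta>2 > 0" and H2: "\<And>y. y \<in> {0..} \<Longrightarrow> y \<noteq> 0 \<Longrightarrow> dist y 0 < \<eta>2 \<Longrightarrow> dist (\<tau> y) (\<tau> 0) < \<epsilon>"
      unfolding eventually_at by auto
    define \<eta> where "\<eta> = min \<delta> (min \<eta>1 \<eta>2)"
    have \<eta>: "\<eta> > 0" unfolding \<eta>_def using \<delta> \<eta>1 \<eta>2 by simp
    have "\<forall>\<^sub>F n in sequentially. dist (h n) 0 < \<eta> / CK"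
      using tendstoD[OF hlim, of "\<eta> / CK"] \<eta> CK by simp
    then show "\<forall>\<^sub>F n in sequentially. dist (integral\<^sup>L lborel (F n)) L < e"
    proof eventually_elim
      case (elim n)
      define hn where "hn = h n"
      have hn: "hn > 0" "hn * CK < \<eta>" using hpos[of n] elim CK
        by (auto simp: hn_def field_simps)
      define D where "D u = F n u - d * \<tau> 0 * S u" for u
      have Dm: "D \<in> borel_measurable borel" unfolding D_def using Fm Sm by measurable
      have Db: "\<bar>D u\<bar> \<le> (B * CK * (T + \<bar>d\<bar>) * \<epsilon>) * indicator {0..CK} u" for u
      proof -
        consider "u < 0" | "u > CK" | "u = 0" | "0 < u \<and> u \<le> CK" by linarith
        then show ?thesis
        proof cases
          case 1 then show ?thesis by (simp add: D_def F_def S_def)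
        next
          case 2 then show ?thesis using \<phi>S[of u] by (simp add: D_def F_def S_def)
        next
          case 3 then show ?thesis using f0 B0 T0 CK \<epsilon> by (simp add: D_def F_def S_def)
        next
          case 4
          define x where "x = hn * u"
          have x: "0 < x" "x < \<eta>" using 4 hn unfolding x_def
            by (auto intro: le_less_trans[OF mult_left_mono[of u CK hn]])
          have a1: "\<bar>f x / x - d\<bar> < \<epsilon>" using H1[of x] x \<eta>_def by (auto simp: dist_real_def)
          have a2: "\<bar>\<tau> x - \<tau> 0\<bar> < \<epsilon>" using H2[of x] x \<eta>_def by (auto simp: dist_real_def)
          have eq: "D u = \<phi> u * u * ((f x / x - d) * \<tau> x + d * (\<tau> x - \<tau> 0))"
            using 4 hn x unfolding D_def F_def S_def x_def hn_def
            by (simp add: field_simps)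
          have b1: "\<bar>(f x / x - d) * \<tau> x\<bar> \<le> \<epsilon> * T"
            unfolding abs_mult using a1 \<tau>B[of x] \<epsilon> by (intro mult_mono) auto
          have b2: "\<bar>d * (\<tau> x - \<tau> 0)\<bar> \<le> \<bar>d\<bar> * \<epsilon>"
            unfolding abs_mult using a2 by (intro mult_left_mono) auto
          have b3: "\<bar>(f x / x - d) * \<tau> x + d * (\<tau> x - \<tau> 0)\<bar> \<le> (T + \<bar>d\<bar>) * \<epsilon>"
            using b1 b2 by (simp add: algebra_simps)
          have b4: "\<bar>\<phi> u * u\<bar> \<le> B * CK"
            unfolding abs_mult using 4 \<phi>B[of u] B0 by (intro mult_mono) auto
          have "\<bar>D u\<bar> \<le> (B * CK) * ((T + \<bar>d\<bar>) * \<epsilon>)"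
            unfolding eq abs_mult[of "\<phi> u * u"] using b3 b4 B0 CK
            by (intro mult_mono) (auto simp: abs_mult)
          then show ?thesis using 4 by (simp add: algebra_simps)
        qed
      qed
      have Di: "integrable lborel D" and Dbd: "\<bar>integral\<^sup>L lborel D\<bar> \<le> B * CK * (T + \<bar>d\<bar>) * \<epsilon> * CK"
        using bound_int[OF Dm Db] CK by auto
      have "F n = (\<lambda>u. D u + d * \<tau> 0 * S u)" by (simp add: D_def fun_eq_iff)
      then have "integral\<^sup>L lborel (F n) = integral\<^sup>L lborel D + d * \<tau> 0 * integral\<^sup>L lborel S"
        using Di Si by simp
      then have "dist (integral\<^sup>L lborel (F n)) L = \<bar>integral\<^sup>L lborel D\<bar>"
        by (simp add: L_def dist_real_def)
      also have "\<dots> \<le> (C - 1) * \<epsilon>" using Dbd by (simp add: C_def algebra_simps)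
      also have "\<dots> < C * \<epsilon>" using \<epsilon> by simp
      also have "\<dots> = e / 2" using C by (simp add: \<epsilon>_def)
      finally show ?case using e by simp
    qed
  qed
qed



lemma tri: fixes x m mu e :: real shows "\<bar>m - mu\<bar> < e / 2 \<Longrightarrow> norm (x - mu) > e \<Longrightarrow> \<bar>x - m\<bar> \<ge> e / 2"
  unfolding real_norm_def by arith

lemma absprod: fixes a b :: real shows "\<bar>a\<bar> \<le> B \<Longrightarrow> \<bar>b\<bar> \<le> B \<Longrightarrow> \<bar>a\<bar> * \<bar>b\<bar> \<le> B * B"
  by (rule mult_mono) auto

lemma abssq: fixes a :: real shows "\<bar>a\<bar> \<le> B \<Longrightarrow> a * a \<le> B * B"
  using absprod[of a B a] by (simp add: abs_mult_self_eq)

lemma (in prob_space) sum_sq_indep: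
  fixes X :: "nat \<Rightarrow> 'a \<Rightarrow> real"
  assumes ind: "indep_vars (\<lambda>_. borel) X UNIV"
    and Xb: "\<And>i w. \<bar>X i w\<bar> \<le> B"
    and E0: "\<And>i. expectation (X i) = 0"
  shows "expectation (\<lambda>w. (\<Sum>i<n. X i w)\<^sup>2) = (\<Sum>i<n. expectation (\<lambda>w. (X i w)\<^sup>2))"
proof -
  have Xm[measurable]: "X i \<in> borel_measurable M" for i
    using ind unfolding indep_vars_def by auto
  have Xi: "integrable M (X i)" for i
    using Xb by (intro integrable_const_bound[where B=B]) auto
  have XXi: "integrable M (\<lambda>w. X i w * X j w)" for i j
    using Xb by (intro integrable_const_bound[where B="B*B"]) (auto simp: abs_mult intro!: absprod)
  have cross: "expectation (\<lambda>w. X i w * X j w) = (if i = j then expectation (\<lambda>w. (X i w)\<^sup>2) else 0)" for i j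
  proof (cases "i = j")
    case True then show ?thesis by (simp add: power2_eq_square)
  next
    case False
    have "expectation (\<lambda>w. \<Prod>k\<in>{i,j}. X k w) = (\<Prod>k\<in>{i,j}. expectation (X k))"
      using Xi by (intro indep_vars_lebesgue_integral indep_vars_subset[OF ind]) auto
    then show ?thesis using False E0 by simp
  qed
  have "expectation (\<lambda>w. (\<Sum>i<n. X i w)\<^sup>2) = expectation (\<lambda>w. \<Sum>i<n. \<Sum>j<n. X i w * X j w)"
    by (simp add: power2_eq_square sum_product)
  also have "\<dots> = (\<Sum>i<n. \<Sum>j<n. expectation (\<lambda>w. X i w * X j w))"
    using XXi by (simp add: Bochner_Integration.integral_sum Bochner_Integration.integrable_sum)
  also have "\<dots> = (\<Sum>i<n. expectation (\<lambda>w. (X i w)\<^sup>2))"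
    by (simp add: cross)
  finally show ?thesis .
qed

lemma wlln:
  fixes Z :: "nat \<Rightarrow> 'w \<Rightarrow> real" and f :: "real \<Rightarrow> real" and g :: "nat \<Rightarrow> real \<Rightarrow> real"
  assumes P: "prob_space M"
    and indep: "prob_space.indep_vars M (\<lambda>_. borel) Z UNIV"
    and dens: "\<And>i. distributed M lborel (Z i) (\<lambda>x. ennreal (f x))"
    and fnn: "\<And>x. f x \<ge> 0"
    and gm: "\<And>n. g n \<in> borel_measurable borel"
    and gb: "\<And>n. \<exists>B. \<forall>x. \<bar>g n x\<bar> \<le> B"
    and mlim: "(\<lambda>n. \<integral>x. f x * g n x \<partial>lborel) \<longlonglongrightarrow> \<mu>"
    and vlim: "(\<lambda>n. (\<integral>x. f x * (g n x)\<^sup>2 \<partial>lborel) / real n) \<longlonglongrightarrow> 0"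
  shows "conv_in_prob M (\<lambda>n w. (1 / real n) * (\<Sum>i<n. g n (Z i w))) \<mu>"
proof -
  interpret prob_space M by fact
  have Zm[measurable]: "Z i \<in> borel_measurable M" for i
    using distributed_measurable[OF dens[of i]] by simp
  define m where "m n = (\<integral>x. f x * g n x \<partial>lborel)" for n
  define v where "v n = (\<integral>x. f x * (g n x)\<^sup>2 \<partial>lborel)" for n
  have Em: "expectation (\<lambda>w. g n (Z i w)) = m n" for n i
    unfolding m_def using gm by (intro distributed_integral[OF dens, symmetric]) (auto simp: fnn)
  have Ev: "expectation (\<lambda>w. (g n (Z i w))\<^sup>2) = v n" for n i
    unfolding v_def using gm by (intro distributed_integral[OF dens, symmetric, where g="\<lambda>x. (g n x)\<^sup>2"]) (auto simp: fnn)
  have key: "prob {w \<in> space M. \<bar>(1 / real n) * (\<Sum>i<n. g n (Z i w)) - m n\<bar> \<ge> a} \<le> v n / real n / a\<^sup>2"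
    if a: "a > 0" and n: "n > 0" for n a
  proof -
    obtain B where B: "\<And>x. \<bar>g n x\<bar> \<le> B" using gb by blast
    define X where "X i w = g n (Z i w) - m n" for i w
    have Xm[measurable]: "X i \<in> borel_measurable M" for i unfolding X_def using gm by measurable
    have Xb: "\<bar>X i w\<bar> \<le> B + \<bar>m n\<bar>" for i w
      using B[of "Z i w"] unfolding X_def by linarith
    have Yi: "integrable M (\<lambda>w. g n (Z i w))" for i
      using B gm by (intro integrable_const_bound[where B=B]) auto
    have Y2i: "integrable M (\<lambda>w. (g n (Z i w))\<^sup>2)" for i
      using B gm by (intro integrable_const_bound[where B="B*B"]) (auto simp: power2_eq_square intro!: abssq)
    have E0: "expectation (X i) = 0" for i
      unfolding X_def using Yi by (simp add: Em prob_space)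
    have indX: "indep_vars (\<lambda>_. borel) X UNIV"
    proof -
      have gm': "(\<lambda>z. g n z - m n) \<in> borel_measurable borel" using gm by measurable
      show ?thesis
        using indep_vars_compose2[OF indep, of "\<lambda>_ z. g n z - m n" "\<lambda>_. borel"] gm'
        unfolding X_def by simp
    qed
    have X2: "expectation (\<lambda>w. (X i w)\<^sup>2) \<le> v n" for i
    proof -
      have "expectation (\<lambda>w. (X i w)\<^sup>2) = variance (\<lambda>w. g n (Z i w))"
        unfolding X_def Em ..
      also have "\<dots> = v n - (m n)\<^sup>2"
        using variance_eq[OF Yi[of i] Y2i[of i]] by (simp add: Em Ev)
      also have "\<dots> \<le> v n" by simp
      finally show ?thesis .
    qed
    define S where "S w = (1 / real n) * (\<Sum>i<n. g n (Z i w))" for w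
    have Sm[measurable]: "S \<in> borel_measurable M" unfolding S_def using gm by measurable
    have S_eq: "S w = m n + (1 / real n) * (\<Sum>i<n. X i w)" for w
      unfolding S_def X_def using n by (simp add: sum_subtractf field_simps)
    have ES: "expectation S = m n"
      unfolding S_def using Yi n by (simp add: Bochner_Integration.integral_sum Em)
    have Sb: "\<bar>S w\<bar> \<le> B" for w
    proof -
      have "\<bar>\<Sum>i<n. g n (Z i w)\<bar> \<le> (\<Sum>i<n. \<bar>g n (Z i w)\<bar>)" by (rule sum_abs)
      also have "\<dots> \<le> real n * B" using sum_bounded_above[of "{..<n}" "\<lambda>i. \<bar>g n (Z i w)\<bar>" B] B by simp
      finally show ?thesis unfolding S_def using n by (simp add: abs_mult field_simps)
    qed
    have S2i: "integrable M (\<lambda>w. (S w)^2)"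
      using Sb by (intro integrable_const_bound[where B="B*B"]) (auto simp: power2_eq_square intro!: abssq)
    have "prob {w \<in> space M. \<bar>S w - expectation S\<bar> \<ge> a} \<le> variance S / a\<^sup>2"
      by (rule Chebyshev_inequality[OF Sm S2i a])
    also have "variance S = expectation (\<lambda>w. (1 / real n)\<^sup>2 * (\<Sum>i<n. X i w)\<^sup>2)"
      unfolding ES by (rule Bochner_Integration.integral_cong) (simp_all add: S_eq power_divide)
    also have "\<dots> = (1 / real n)\<^sup>2 * expectation (\<lambda>w. (\<Sum>i<n. X i w)\<^sup>2)"
      by (rule integral_mult_right_zero)
    also have "\<dots> = (1 / real n)\<^sup>2 * (\<Sum>i<n. expectation (\<lambda>w. (X i w)\<^sup>2))"
      using sum_sq_indep[OF indX Xb E0] by simp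
    also have "\<dots> \<le> (1 / real n)\<^sup>2 * (real n * v n)"
      using sum_bounded_above[of "{..<n}" "\<lambda>i. expectation (\<lambda>w. (X i w)\<^sup>2)" "v n"] X2
      by (intro mult_left_mono) auto
    also have "\<dots> = v n / real n" using n by (simp add: power2_eq_square)
    finally have "prob {w \<in> space M. \<bar>S w - m n\<bar> \<ge> a} \<le> v n / real n / a\<^sup>2"
      unfolding ES by (simp add: divide_right_mono)
    then show ?thesis unfolding S_def .
  qed
  show ?thesis
    unfolding conv_in_prob_def
  proof (intro allI impI)
    fix e :: real assume e: "e > 0"
    have ev1: "\<forall>\<^sub>F n in sequentially. \<bar>m n - \<mu>\<bar> < e / 2"
      using tendstoD[OF mlim, of "e/2"] e by (simp add: m_def dist_real_def)
    have "\<forall>\<^sub>F n in sequentially. prob {w \<in> space M. norm ((1 / real n) * (\<Sum>i<n. g n (Z i w)) - \<mu>) > e} \<le> v n / real n / (e/2)\<^sup>2"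
      using ev1 eventually_gt_at_top[of 0]
    proof eventually_elim
      case (elim n)
      have sub: "{w \<in> space M. norm ((1 / real n) * (\<Sum>i<n. g n (Z i w)) - \<mu>) > e}
          \<subseteq> {w \<in> space M. \<bar>(1 / real n) * (\<Sum>i<n. g n (Z i w)) - m n\<bar> \<ge> e/2}"
      proof (rule subsetI)
        fix w assume "w \<in> {w \<in> space M. norm ((1 / real n) * (\<Sum>i<n. g n (Z i w)) - \<mu>) > e}"
        then show "w \<in> {w \<in> space M. \<bar>(1 / real n) * (\<Sum>i<n. g n (Z i w)) - m n\<bar> \<ge> e/2}"
          using tri[OF elim(1), of "(1 / real n) * (\<Sum>i<n. g n (Z i w))"] by simp
      qed
      have "prob {w \<in> space M. norm ((1 / real n) * (\<Sum>i<n. g n (Z i w)) - \<mu>) > e}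
          \<le> prob {w \<in> space M. \<bar>(1 / real n) * (\<Sum>i<n. g n (Z i w)) - m n\<bar> \<ge> e/2}"
        by (rule finite_measure_mono[OF sub]) (use gm in measurable)
      also have "\<dots> \<le> v n / real n / (e/2)\<^sup>2"
        using key[of "e/2" n] e elim(2) by simp
      finally show ?case .
    qed
    note ev2 = this
    have lim0: "(\<lambda>n. v n / real n / (e/2)\<^sup>2) \<longlonglongrightarrow> 0"
      using tendsto_divide[OF vlim tendsto_const[of "(e/2)\<^sup>2"]] e unfolding v_def by simp
    show "(\<lambda>n. prob {w \<in> space M. norm ((1 / real n) * (\<Sum>i<n. g n (Z i w)) - \<mu>) > e}) \<longlonglongrightarrow> 0"
      by (rule tendsto_sandwich[OF _ ev2 tendsto_const lim0]) (simp add: measure_nonneg)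
  qed
qed



lemma norm_le_sum_rows: fixes x :: "'a::real_normed_vector^'n" shows "norm x \<le> (\<Sum>i\<in>UNIV. norm (x$i))"
  by (simp add: norm_vec_def L2_set_le_sum)

lemma conv_matrix:
  fixes X :: "nat \<Rightarrow> 'w \<Rightarrow> real^2^2" and c :: "real^2^2"
  assumes P: "prob_space M"
    and meas: "\<And>n j k. (\<lambda>w. X n w $ j $ k) \<in> borel_measurable M"
    and conv: "\<And>j k. conv_in_prob M (\<lambda>n w. X n w $ j $ k) (c $ j $ k)"
  shows "conv_in_prob M X c"
  unfolding conv_in_prob_def
proof (intro allI impI)
  interpret prob_space M by fact
  fix e :: real assume e: "e > 0"
  define A where "A n p = {w \<in> space M. norm (X n w $ fst p $ snd p - c $ fst p $ snd p) > e/4}" for n and p :: "2 \<times> 2"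
  have Am: "A n p \<in> sets M" for n p unfolding A_def using meas by measurable
  have sub: "{w \<in> space M. norm (X n w - c) > e} \<subseteq> (\<Union>p\<in>UNIV. A n p)" for n
  proof
    fix w assume w: "w \<in> {w \<in> space M. norm (X n w - c) > e}"
    show "w \<in> (\<Union>p\<in>UNIV. A n p)"
    proof (rule ccontr)
      assume nw: "w \<notin> (\<Union>p\<in>UNIV. A n p)"
      have le: "\<bar>(X n w - c) $ j $ k\<bar> \<le> e/4" for j k
      proof -
        have "w \<notin> A n (j, k)" using nw by blast
        then show ?thesis using w by (simp add: A_def not_less)
      qed
      have "norm (X n w - c) \<le> (\<Sum>j\<in>UNIV. norm ((X n w - c) $ j))" by (rule norm_le_sum_rows)
      also have "\<dots> \<le> (\<Sum>j\<in>UNIV. \<Sum>k\<in>UNIV. \<bar>(X n w - c) $ j $ k\<bar>)"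
        by (intro sum_mono norm_le_l1_cart)
      also have "\<dots> \<le> (\<Sum>j\<in>(UNIV::2 set). \<Sum>k\<in>(UNIV::2 set). e/4)"
        using le by (intro sum_mono) simp
      also have "\<dots> = e" by simp
      finally show False using w by simp
    qed
  qed
  have bnd: "measure M {w \<in> space M. norm (X n w - c) > e} \<le> (\<Sum>p\<in>UNIV. measure M (A n p))" for n
  proof -
    have "measure M {w \<in> space M. norm (X n w - c) > e} \<le> measure M (\<Union>p\<in>UNIV. A n p)"
      by (rule finite_measure_mono[OF sub]) (use Am in auto)
    also have "\<dots> \<le> (\<Sum>p\<in>UNIV. measure M (A n p))"
      by (rule measure_UNION_le) (use Am in auto)
    finally show ?thesis .
  qed
  have lim: "(\<lambda>n. \<Sum>p\<in>UNIV. measure M (A n p)) \<longlonglongrightarrow> 0"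
  proof (rule tendsto_null_sum)
    fix p :: "2 \<times> 2"
    show "(\<lambda>n. measure M (A n p)) \<longlonglongrightarrow> 0"
      using conv[of "fst p" "snd p", unfolded conv_in_prob_def, rule_format, of "e/4"] e
      unfolding A_def by simp
  qed
  show "(\<lambda>n. measure M {w \<in> space M. norm (X n w - c) > e}) \<longlonglongrightarrow> 0"
    by (rule tendsto_sandwich[OF _ _ tendsto_const lim]) (auto simp: measure_nonneg bnd)
qed

lemma r1_nth: "r1 z $ i = (if i = 1 then 1 else z)"
  using exhaust_2[of i] by (auto simp: r1_def)

lemma r1_bound: "\<bar>r1 z $ i\<bar> \<le> 1 + \<bar>z\<bar>"
  by (simp add: r1_nth)

lemma r1_nth_cont: "continuous_on UNIV (\<lambda>z. r1 z $ i)"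
  by (cases "i = 1") (simp_all add: r1_nth continuous_on_id continuous_on_const)

lemma outer_r1_cont: "continuous_on UNIV (\<lambda>z. outer (r1 z) (r1 z))"
  unfolding outer_def
  by (intro continuous_on_vec_lambda continuous_on_mult r1_nth_cont)

lemma outer_r1_meas[measurable]: "(\<lambda>z. outer (r1 z) (r1 z)) \<in> borel_measurable borel"
  by (rule borel_measurable_continuous_onI[OF outer_r1_cont])

lemma outer_entry: "outer u v $ j $ k = u $ j * v $ k"
  by (simp add: outer_def)

lemma outer_r1_norm: "norm (outer (r1 z) (r1 z)) \<le> 4 * (1 + \<bar>z\<bar>)\<^sup>2"
proof -
  have "norm (outer (r1 z) (r1 z)) \<le> (\<Sum>j\<in>UNIV. norm (outer (r1 z) (r1 z) $ j))" by (rule norm_le_sum_rows)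
  also have "\<dots> \<le> (\<Sum>j\<in>UNIV. \<Sum>k\<in>UNIV. \<bar>outer (r1 z) (r1 z) $ j $ k\<bar>)"
    by (intro sum_mono norm_le_l1_cart)
  also have "\<dots> \<le> (\<Sum>j\<in>(UNIV::2 set). \<Sum>k\<in>(UNIV::2 set). (1 + \<bar>z\<bar>)\<^sup>2)"
    unfolding outer_entry abs_mult power2_eq_square
    by (intro sum_mono mult_mono r1_bound) auto
  also have "\<dots> = 4 * (1 + \<bar>z\<bar>)\<^sup>2" by simp
  finally show ?thesis .
qed

lemma int_entry:
  fixes w :: "real \<Rightarrow> real"
  assumes wm[measurable]: "w \<in> borel_measurable borel" and wb: "\<And>z. \<bar>w z\<bar> \<le> B"
    and ws: "\<And>z. \<bar>z\<bar> > CK \<Longrightarrow> w z = 0"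
  shows "(LINT z:{0..}|lborel. w z *\<^sub>R outer (r1 z) (r1 z)) $ j $ k
       = (\<integral>z. indicator {0..} z * (w z * (r1 z $ j * r1 z $ k)) \<partial>lborel)"
proof -
  define G where "G z = indicator {0..} z *\<^sub>R (w z *\<^sub>R outer (r1 z) (r1 z))" for z
  have Gm: "G \<in> borel_measurable borel" unfolding G_def by measurable
  have ii: "integrable lborel (\<lambda>z. (B * 4 * (1 + \<bar>CK\<bar>)\<^sup>2) * indicator {-\<bar>CK\<bar>..\<bar>CK\<bar>} z :: real)"
    by (intro integrable_mult_right integrable_real_indicator) auto
  have Gb: "norm (G z) \<le> (B * 4 * (1 + \<bar>CK\<bar>)\<^sup>2) * indicator {-\<bar>CK\<bar>..\<bar>CK\<bar>} z" for z
  proof (cases "\<bar>z\<bar> \<le> \<bar>CK\<bar>")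
    case True
    have "norm (G z) \<le> \<bar>w z\<bar> * norm (outer (r1 z) (r1 z))"
      by (simp add: G_def indicator_def)
    also have "\<dots> \<le> B * (4 * (1 + \<bar>CK\<bar>)\<^sup>2)"
      using wb[of z] outer_r1_norm[of z] True
      by (intro mult_mono order_trans[OF outer_r1_norm]) (auto intro!: power_mono)
    finally show ?thesis using True by (simp add: indicator_def abs_le_iff)
  next
    case False
    then show ?thesis using ws[of z] by (auto simp: G_def indicator_def abs_le_iff)
  qed
  have Gi: "integrable lborel G"
    by (rule Bochner_Integration.integrable_bound[OF ii]) (use Gm Gb in \<open>auto intro: order_trans[OF _ abs_ge_self]\<close>)
  have bl: "bounded_linear (\<lambda>A::real^2^2. A $ j $ k)"
    using bounded_linear_compose[OF bounded_linear_vec_nth bounded_linear_vec_nth] .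
  have "(LINT z:{0..}|lborel. w z *\<^sub>R outer (r1 z) (r1 z)) = integral\<^sup>L lborel G"
    unfolding set_lebesgue_integral_def G_def ..
  then have "(LINT z:{0..}|lborel. w z *\<^sub>R outer (r1 z) (r1 z)) $ j $ k = (\<integral>z. G z $ j $ k \<partial>lborel)"
    using integral_bounded_linear[OF bl Gi] by simp
  also have "\<dots> = (\<integral>z. indicator {0..} z * (w z * (r1 z $ j * r1 z $ k)) \<partial>lborel)"
    by (simp add: G_def outer_entry mult.assoc)
  finally show ?thesis .
qed



lemma Gamma_entry:
  "((1 / h) *\<^sub>R Gamma_plus Z K n h w) $ j $ k
     = (1 / real n) * (\<Sum>i<n. gg (\<lambda>u. K u * (r1 u $ j * r1 u $ k)) (\<lambda>_. 1) h (Z i w))"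
  unfolding Gamma_plus_def gg_def vector_scaleR_component sum_component outer_entry real_scaleR_def sum_distrib_left
  by (rule sum.cong[OF refl]) (simp add: power2_eq_square mult_ac)

lemma Psi_entry:
  "(Psi_plus Z K s2 n h w) $ j $ k
     = (1 / real n) * (\<Sum>i<n. gg (\<lambda>u. (K u)\<^sup>2 * (r1 u $ j * r1 u $ k)) s2 h (Z i w))"
  unfolding Psi_plus_def gg_def vector_scaleR_component sum_component outer_entry real_scaleR_def sum_distrib_left
  by (rule sum.cong[OF refl]) (simp add: power2_eq_square mult_ac)

lemma gg_sq: "(gg \<phi> \<tau> h z)\<^sup>2 = gg (\<lambda>u. (\<phi> u)\<^sup>2) (\<lambda>u. (\<tau> u)\<^sup>2) h z / h\<^sup>2"
  unfolding gg_def by (simp add: indicator_def power2_eq_square)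

lemma combined:
  fixes Z :: "nat \<Rightarrow> 'w \<Rightarrow> real" and f \<phi> \<tau> :: "real \<Rightarrow> real" and h :: "nat \<Rightarrow> real"
  assumes P: "prob_space M"
    and indep: "prob_space.indep_vars M (\<lambda>_. borel) Z UNIV"
    and dens: "\<And>i. distributed M lborel (Z i) (\<lambda>x. ennreal (f x))"
    and fnn: "\<And>x. f x \<ge> 0"
    and f0: "f 0 = 0"
    and fd: "(f has_real_derivative d) (at 0 within {0..\<delta>})" and \<delta>: "\<delta> > 0"
    and \<phi>m: "\<phi> \<in> borel_measurable borel" and \<phi>B: "\<And>u. \<bar>\<phi> u\<bar> \<le> B"
    and \<phi>S: "\<And>u. u > CK \<Longrightarrow> \<phi> u = 0" and CK: "CK > 0"
    and \<tau>m: "\<tau> \<in> borel_measurable borel" and \<tau>B: "\<And>u. \<bar>\<tau> u\<bar> \<le> T"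
    and \<tau>c: "continuous (at 0 within {0..}) \<tau>"
    and hpos: "\<And>n. h n > 0" and hlim: "h \<longlonglongrightarrow> 0"
    and nh2: "filterlim (\<lambda>n. real n * (h n)\<^sup>2) at_top sequentially"
  shows "conv_in_prob M (\<lambda>n w. (1 / real n) * (\<Sum>i<n. gg \<phi> \<tau> (h n) (Z i w)))
           (d * \<tau> 0 * (\<integral>u. indicator {0..} u * (u * \<phi> u) \<partial>lborel))"
proof -
  have fm: "f \<in> borel_measurable borel"
    using distributed_real_measurable[OF _ dens[of 0]] fnn by simp
  show ?thesis
  proof (rule wlln[OF P indep dens fnn])
    show "gg \<phi> \<tau> (h n) \<in> borel_measurable borel" for n using \<phi>m \<tau>m by simp
    show "\<exists>B'. \<forall>x. \<bar>gg \<phi> \<tau> (h n) x\<bar> \<le> B'" for n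
    proof (intro exI allI)
      fix x
      have "\<bar>indicator {0..} x * \<phi> (x / h n) * \<tau> x\<bar> \<le> 1 * B * T"
        unfolding abs_mult
        by (intro mult_mono) (auto simp: indicator_def \<phi>B \<tau>B intro: order_trans[OF abs_ge_zero \<phi>B])
      then show "\<bar>gg \<phi> \<tau> (h n) x\<bar> \<le> B * T / (h n)\<^sup>2"
        unfolding gg_def using hpos[of n] by (simp add: divide_right_mono)
    qed
    show "(\<lambda>n. \<integral>x. f x * gg \<phi> \<tau> (h n) x \<partial>lborel)
           \<longlonglongrightarrow> d * \<tau> 0 * (\<integral>u. indicator {0..} u * (u * \<phi> u) \<partial>lborel)"
      by (rule expect_lim[OF f0 fd \<delta> \<phi>m \<phi>B \<phi>S CK \<tau>m \<tau>B \<tau>c hpos hlim fm])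
    have \<phi>2B: "\<bar>(\<phi> u)\<^sup>2\<bar> \<le> B\<^sup>2" for u
    proof -
      have "\<bar>(\<phi> u)\<^sup>2\<bar> = \<bar>\<phi> u\<bar>\<^sup>2" by simp
      also have "\<dots> \<le> B\<^sup>2" by (rule power_mono[OF \<phi>B abs_ge_zero])
      finally show ?thesis .
    qed
    have \<tau>2B: "\<bar>(\<tau> u)\<^sup>2\<bar> \<le> T\<^sup>2" for u
    proof -
      have "\<bar>(\<tau> u)\<^sup>2\<bar> = \<bar>\<tau> u\<bar>\<^sup>2" by simp
      also have "\<dots> \<le> T\<^sup>2" by (rule power_mono[OF \<tau>B abs_ge_zero])
      finally show ?thesis .
    qed
    have \<phi>2m: "(\<lambda>u. (\<phi> u)\<^sup>2) \<in> borel_measurable borel" using \<phi>m by measurable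
    have \<tau>2m: "(\<lambda>u. (\<tau> u)\<^sup>2) \<in> borel_measurable borel" using \<tau>m by measurable
    have \<phi>2S: "u > CK \<Longrightarrow> (\<phi> u)\<^sup>2 = 0" for u using \<phi>S by simp
    have \<tau>2c: "continuous (at 0 within {0..}) (\<lambda>u. (\<tau> u)\<^sup>2)"
      by (rule continuous_power[OF \<tau>c])
    have lim2: "(\<lambda>n. \<integral>x. f x * gg (\<lambda>u. (\<phi> u)\<^sup>2) (\<lambda>u. (\<tau> u)\<^sup>2) (h n) x \<partial>lborel)
           \<longlonglongrightarrow> d * (\<tau> 0)\<^sup>2 * (\<integral>u. indicator {0..} u * (u * (\<phi> u)\<^sup>2) \<partial>lborel)"
      by (rule expect_lim[OF f0 fd \<delta> \<phi>2m \<phi>2B \<phi>2S CK \<tau>2m \<tau>2B \<tau>2c hpos hlim fm])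
    have eq: "(\<integral>x. f x * (gg \<phi> \<tau> (h n) x)\<^sup>2 \<partial>lborel) / real n
        = (\<integral>x. f x * gg (\<lambda>u. (\<phi> u)\<^sup>2) (\<lambda>u. (\<tau> u)\<^sup>2) (h n) x \<partial>lborel) / (real n * (h n)\<^sup>2)" for n
    proof -
      have "(\<integral>x. f x * (gg \<phi> \<tau> (h n) x)\<^sup>2 \<partial>lborel)
          = (\<integral>x. f x * gg (\<lambda>u. (\<phi> u)\<^sup>2) (\<lambda>u. (\<tau> u)\<^sup>2) (h n) x / (h n)\<^sup>2 \<partial>lborel)"
        by (simp add: gg_sq)
      also have "\<dots> = (\<integral>x. f x * gg (\<lambda>u. (\<phi> u)\<^sup>2) (\<lambda>u. (\<tau> u)\<^sup>2) (h n) x \<partial>lborel) / (h n)\<^sup>2"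
        by (rule integral_divide_zero)
      finally show ?thesis by simp
    qed
    show "(\<lambda>n. (\<integral>x. f x * (gg \<phi> \<tau> (h n) x)\<^sup>2 \<partial>lborel) / real n) \<longlonglongrightarrow> 0"
      unfolding eq
      by (rule tendsto_divide_0[OF lim2 filterlim_at_top_imp_at_infinity[OF nh2]])
  qed
qed



theorem propositionF1:
  fixes M :: "'w measure"
    and Z :: "nat \<Rightarrow> 'w \<Rightarrow> real"
    and fZ fZ' :: "real \<Rightarrow> real"
    and \<delta> :: real
    and \<sigma>2 :: "real \<Rightarrow> real"
    and K :: "real \<Rightarrow> real"
    and CK :: real
    and h :: "nat \<Rightarrow> real"
  assumes "prob_space M"
    and indep: "prob_space.indep_vars M (\<lambda>_. borel) Z UNIV"
    and dens: "\<And>i. distributed M lborel (Z i) (\<lambda>x. ennreal (fZ x))"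
    and fZ_nonneg: "\<And>x. fZ x \<ge> 0"
    and fZ0: "fZ 0 = 0"
    and \<delta>_pos: "\<delta> > 0"
    and fZ_deriv: "\<And>x. x \<in> {0..\<delta>} \<Longrightarrow> (fZ has_real_derivative fZ' x) (at x within {0..\<delta>})"
    and fZ'_cont: "continuous_on {0..\<delta>} fZ'"
    and \<sigma>2_meas: "\<sigma>2 \<in> borel_measurable borel"
    and \<sigma>2_nonneg: "\<And>z. \<sigma>2 z \<ge> 0"
    and \<sigma>2_bdd: "bounded (range \<sigma>2)"
    and \<sigma>2_rcont: "continuous (at 0 within {0..}) \<sigma>2"
    and K_meas: "K \<in> borel_measurable borel"
    and K_nonneg: "\<And>z. K z \<ge> 0"
    and K_bdd: "bounded (range K)"
    and CK_pos: "CK > 0"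
    and K_supp: "\<And>z. \<bar>z\<bar> > CK \<Longrightarrow> K z = 0"
    and K_int_pos: "(LINT z:{0..}|lborel. K z) = 1"
    and K_int_neg: "(LINT z:{..<0}|lborel. K z) = 1"
    and K_nonsing_pos: "invertible (LINT z:{0..}|lborel. K z *\<^sub>R outer (r1 z) (r1 z))"
    and K_nonsing_neg: "invertible (LINT z:{..<0}|lborel. K z *\<^sub>R outer (r1 z) (r1 z))"
    and h_pos: "\<And>n. h n > 0"
    and h_lim: "h \<longlonglongrightarrow> 0"
    and nh2: "filterlim (\<lambda>n. real n * (h n)\<^sup>2) at_top sequentially"
  shows "conv_in_prob M (\<lambda>n \<omega>. (1 / h n) *\<^sub>R Gamma_plus Z K n (h n) \<omega>)
           (fZ' 0 *\<^sub>R (LINT z:{0..}|lborel. (z * K z) *\<^sub>R outer (r1 z) (r1 z)))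
       \<and> conv_in_prob M (\<lambda>n \<omega>. Psi_plus Z K \<sigma>2 n (h n) \<omega>)
           ((fZ' 0 * \<sigma>2 0) *\<^sub>R (LINT z:{0..}|lborel. (z * (K z)\<^sup>2) *\<^sub>R outer (r1 z) (r1 z)))"
proof -
  interpret prob_space M by fact
  obtain BK where BK: "\<And>z. \<bar>K z\<bar> \<le> BK" using K_bdd unfolding bounded_real by auto
  obtain Bs where Bs: "\<And>z. \<bar>\<sigma>2 z\<bar> \<le> Bs" using \<sigma>2_bdd unfolding bounded_real by auto
  have BK0: "BK \<ge> 0" using BK[of 0] by simp
  have Zm[measurable]: "Z i \<in> borel_measurable M" for i
    using distributed_measurable[OF dens[of i]] by simp
  have fd: "(fZ has_real_derivative fZ' 0) (at 0 within {0..\<delta>})" using fZ_deriv \<delta>_pos by simp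
  define \<rho> where "\<rho> j k u = r1 u $ j * r1 u $ k" for j k :: 2 and u
  have \<rho>m[measurable]: "\<rho> j k \<in> borel_measurable borel" for j k
    unfolding \<rho>_def by (intro borel_measurable_continuous_onI continuous_on_mult r1_nth_cont)
  have \<rho>B: "\<bar>\<rho> j k u\<bar> \<le> (1 + CK)\<^sup>2" if "\<bar>u\<bar> \<le> CK" for j k u
  proof -
    have "\<bar>\<rho> j k u\<bar> \<le> (1 + \<bar>u\<bar>) * (1 + \<bar>u\<bar>)"
      unfolding \<rho>_def abs_mult by (intro mult_mono r1_bound) auto
    also have "\<dots> \<le> (1 + CK) * (1 + CK)" using that by (intro mult_mono) auto
    finally show ?thesis by (simp add: power2_eq_square)
  qed
  define \<phi>G where "\<phi>G j k u = K u * \<rho> j k u" for j k u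
  define \<phi>P where "\<phi>P j k u = (K u)\<^sup>2 * \<rho> j k u" for j k u
  have \<phi>Gm[measurable]: "\<phi>G j k \<in> borel_measurable borel" for j k
    unfolding \<phi>G_def using K_meas by measurable
  have \<phi>Pm[measurable]: "\<phi>P j k \<in> borel_measurable borel" for j k
    unfolding \<phi>P_def using K_meas by measurable
  have \<phi>GB: "\<bar>\<phi>G j k u\<bar> \<le> BK * (1 + CK)\<^sup>2" for j k u
  proof (cases "\<bar>u\<bar> \<le> CK")
    case True
    then show ?thesis unfolding \<phi>G_def abs_mult using BK[of u] \<rho>B[OF True] BK0
      by (intro mult_mono) auto
  next
    case False then show ?thesis using K_supp[of u] BK0 by (simp add: \<phi>G_def)
  qed
  have \<phi>PB: "\<bar>\<phi>P j k u\<bar> \<le> BK\<^sup>2 * (1 + CK)\<^sup>2" for j k u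
  proof (cases "\<bar>u\<bar> \<le> CK")
    case True
    have "\<bar>(K u)\<^sup>2\<bar> \<le> BK\<^sup>2" using power_mono[OF BK[of u] abs_ge_zero, of 2] by simp
    then show ?thesis unfolding \<phi>P_def abs_mult[of "(K u)\<^sup>2"] using \<rho>B[OF True] BK0
      by (intro mult_mono) auto
  next
    case False then show ?thesis using K_supp[of u] BK0 by (simp add: \<phi>P_def)
  qed
  have \<phi>GS: "\<phi>G j k u = 0" if "u > CK" for j k u using K_supp[of u] that by (simp add: \<phi>G_def)
  have \<phi>PS: "\<phi>P j k u = 0" if "u > CK" for j k u using K_supp[of u] that by (simp add: \<phi>P_def)
  have c1: "continuous (at 0 within {0..}) (\<lambda>_::real. 1::real)" by simp
  have wG: "\<bar>z * K z\<bar> \<le> CK * BK" for z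
  proof (cases "\<bar>z\<bar> \<le> CK")
    case True then show ?thesis unfolding abs_mult using BK[of z] by (intro mult_mono) auto
  next
    case False then show ?thesis using K_supp[of z] CK_pos BK0 by simp
  qed
  have wP: "\<bar>z * (K z)\<^sup>2\<bar> \<le> CK * BK\<^sup>2" for z
  proof (cases "\<bar>z\<bar> \<le> CK")
    case True
    have "\<bar>(K z)\<^sup>2\<bar> \<le> BK\<^sup>2" using power_mono[OF BK[of z] abs_ge_zero, of 2] by simp
    then show ?thesis unfolding abs_mult[of z] using True by (intro mult_mono) auto
  next
    case False then show ?thesis using K_supp[of z] CK_pos BK0 by simp
  qed
  have wGm: "(\<lambda>z. z * K z) \<in> borel_measurable borel" using K_meas by measurable
  have wPm: "(\<lambda>z. z * (K z)\<^sup>2) \<in> borel_measurable borel" using K_meas by measurable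
  have wGS: "z * K z = 0" if "\<bar>z\<bar> > CK" for z using K_supp[OF that] by simp
  have wPS: "z * (K z)\<^sup>2 = 0" if "\<bar>z\<bar> > CK" for z using K_supp[OF that] by simp
  show ?thesis
  proof
    show "conv_in_prob M (\<lambda>n \<omega>. (1 / h n) *\<^sub>R Gamma_plus Z K n (h n) \<omega>)
           (fZ' 0 *\<^sub>R (LINT z:{0..}|lborel. (z * K z) *\<^sub>R outer (r1 z) (r1 z)))"
    proof (rule conv_matrix[OF \<open>prob_space M\<close>])
      fix n j k
      show "(\<lambda>w. ((1 / h n) *\<^sub>R Gamma_plus Z K n (h n) w) $ j $ k) \<in> borel_measurable M"
        unfolding Gamma_entry \<rho>_def[symmetric] \<phi>G_def[symmetric] by measurable
    next
      fix j k
      have "conv_in_prob M (\<lambda>n w. (1 / real n) * (\<Sum>i<n. gg (\<phi>G j k) (\<lambda>_. 1) (h n) (Z i w)))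
           (fZ' 0 * 1 * (\<integral>u. indicator {0..} u * (u * \<phi>G j k u) \<partial>lborel))"
        by (rule combined[OF \<open>prob_space M\<close> indep dens fZ_nonneg fZ0 fd \<delta>_pos \<phi>Gm \<phi>GB \<phi>GS CK_pos
              _ _ c1 h_pos h_lim nh2]) auto
      note conv1 = this
      have eqc: "(LINT z:{0..}|lborel. (z * K z) *\<^sub>R outer (r1 z) (r1 z)) $ j $ k = (\<integral>u. indicator {0..} u * (u * \<phi>G j k u) \<partial>lborel)"
        using int_entry[OF wGm wG wGS, where j=j and k=k] by (simp add: \<phi>G_def \<rho>_def mult_ac)
      show "conv_in_prob M (\<lambda>n w. ((1 / h n) *\<^sub>R Gamma_plus Z K n (h n) w) $ j $ k)
          ((fZ' 0 *\<^sub>R (LINT z:{0..}|lborel. (z * K z) *\<^sub>R outer (r1 z) (r1 z))) $ j $ k)"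
        unfolding Gamma_entry \<rho>_def[symmetric] \<phi>G_def[symmetric] unfolding vector_scaleR_component eqc using conv1 by simp
    qed
  next
    show "conv_in_prob M (\<lambda>n \<omega>. Psi_plus Z K \<sigma>2 n (h n) \<omega>)
           ((fZ' 0 * \<sigma>2 0) *\<^sub>R (LINT z:{0..}|lborel. (z * (K z)\<^sup>2) *\<^sub>R outer (r1 z) (r1 z)))"
    proof (rule conv_matrix[OF \<open>prob_space M\<close>])
      fix n j k
      show "(\<lambda>w. (Psi_plus Z K \<sigma>2 n (h n) w) $ j $ k) \<in> borel_measurable M"
        unfolding Psi_entry \<rho>_def[symmetric] \<phi>P_def[symmetric] using \<sigma>2_meas by measurable
    next
      fix j k
      have "conv_in_prob M (\<lambda>n w. (1 / real n) * (\<Sum>i<n. gg (\<phi>P j k) \<sigma>2 (h n) (Z i w)))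
           (fZ' 0 * \<sigma>2 0 * (\<integral>u. indicator {0..} u * (u * \<phi>P j k u) \<partial>lborel))"
        by (rule combined[OF \<open>prob_space M\<close> indep dens fZ_nonneg fZ0 fd \<delta>_pos \<phi>Pm \<phi>PB \<phi>PS CK_pos
              \<sigma>2_meas Bs \<sigma>2_rcont h_pos h_lim nh2])
      note conv1 = this
      have eqc: "(LINT z:{0..}|lborel. (z * (K z)\<^sup>2) *\<^sub>R outer (r1 z) (r1 z)) $ j $ k = (\<integral>u. indicator {0..} u * (u * \<phi>P j k u) \<partial>lborel)"
        using int_entry[OF wPm wP wPS, where j=j and k=k] by (simp add: \<phi>P_def \<rho>_def mult_ac)
      show "conv_in_prob M (\<lambda>n w. (Psi_plus Z K \<sigma>2 n (h n) w) $ j $ k)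
          (((fZ' 0 * \<sigma>2 0) *\<^sub>R (LINT z:{0..}|lborel. (z * (K z)\<^sup>2) *\<^sub>R outer (r1 z) (r1 z))) $ j $ k)"
        unfolding Psi_entry \<rho>_def[symmetric] \<phi>P_def[symmetric] unfolding vector_scaleR_component eqc using conv1 by simp
    qed
  qed
qed


end
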